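(* For $n\geqslant 1$ and $1\leqslant i\leqslant n$, inside $W_n$ we have $W_{i-1}\cap\big(s_i\cdots s_n\,W_{n-1}\,s_n\cdots s_i\big)=W_{i-2}$.
   Context: Standing setup: $\Gamma_1$ is an arbitrary finite Coxeter diagram with a preferred vertex $s_1$ (edge $\{s,t\}$ iff $m_{st}\geqslant3$; unlabelled edge means $m_{st}=3$, no edge means $m_{st}=2$). For $n\geqslant 2$, $\Gamma_n$ is obtained from $\Gamma_{n-1}$ by adding one new vertex $s_n$ joined by an unlabelled edge to $s_{n-1}$ and to no other vertex. $\Gamma_0$ is $\Gamma_1$ with $s_1$ deleted; $\Gamma_{-1}$ is $\Gamma_1$ with $s_1$ and all vertices joined to $s_1$ by an edge deleted. For $n\geqslant -1$, $S_n$ is the vertex set of $\Gamma_n$ and $W_n$ the Coxeter group; $S_n=S_0\cup\{s_1,\dots,s_n\}$ and $W_m$ ($m\leqslant n$) is identified with the standard parabolic subgroup of $W_n$ generated by $S_m$. *)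

theory Defs
  imports Main "HOL-Library.Extended_Nat"
begin

text \<open>Coxeter matrix on a vertex set V; the value \<infinity> is allowed (no relation).\<close>
definition coxeter_matrix :: "'a set \<Rightarrow> ('a \<Rightarrow> 'a \<Rightarrow> enat) \<Rightarrow> bool" where
  "coxeter_matrix V M \<longleftrightarrow>
     (\<forall>s\<in>V. M s s = 1) \<and> (\<forall>s\<in>V. \<forall>t\<in>V. M s t = M t s) \<and>
     (\<forall>s\<in>V. \<forall>t\<in>V. s \<noteq> t \<longrightarrow> M s t \<ge> 2)"

inductive cox_eq :: "'g set \<Rightarrow> ('g \<Rightarrow> 'g \<Rightarrow> enat) \<Rightarrow> 'g list \<Rightarrow> 'g list \<Rightarrow> bool"
  for S M where
  rel: "s \<in> S \<Longrightarrow> t \<in> S \<Longrightarrow> M s t = enat k \<Longrightarrow> cox_eq S M (concat (replicate k [s, t])) []"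
| refl: "cox_eq S M w w"
| sym: "cox_eq S M w v \<Longrightarrow> cox_eq S M v w"
| trans: "cox_eq S M u v \<Longrightarrow> cox_eq S M v w \<Longrightarrow> cox_eq S M u w"
| ctxt: "cox_eq S M x y \<Longrightarrow> cox_eq S M (u @ x @ v) (u @ y @ v)"

text \<open>The element of the Coxeter group W(S,M) represented by a word w (an equivalence class).\<close>
definition cox_class :: "'g set \<Rightarrow> ('g \<Rightarrow> 'g \<Rightarrow> enat) \<Rightarrow> 'g list \<Rightarrow> 'g list set" where
  "cox_class S M w = {v \<in> lists S. cox_eq S M w v}"

definition parabolic :: "'g set \<Rightarrow> ('g \<Rightarrow> 'g \<Rightarrow> enat) \<Rightarrow> 'g set \<Rightarrow> 'g list set set" where
  "parabolic S M T = cox_class S M ` lists T"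

text \<open>Vertices: Inl a for a vertex a of Gamma_1 other than s1, and Inr k for s_k (k \<ge> 1).
  Coxeter matrix of all the Gamma_n simultaneously.\<close>
definition ext_M :: "('a \<Rightarrow> 'a \<Rightarrow> enat) \<Rightarrow> 'a \<Rightarrow> ('a + nat) \<Rightarrow> ('a + nat) \<Rightarrow> enat" where
  "ext_M M s1 x y = (case (x, y) of
      (Inl a, Inl b) \<Rightarrow> M a b
    | (Inl a, Inr k) \<Rightarrow> (if k = 1 then M a s1 else 2)
    | (Inr k, Inl a) \<Rightarrow> (if k = 1 then M s1 a else 2)
    | (Inr j, Inr k) \<Rightarrow> (if j = k then 1 else if j = k + 1 \<or> k = j + 1 then 3 else 2))"

text \<open>S_n for n \<ge> -1: S_{-1} = vertices of Gamma_1 not equal and not joined to s1;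
  S_n = (V - {s1}) \<union> {s_1,...,s_n} for n \<ge> 0.\<close>
definition gens :: "'a set \<Rightarrow> ('a \<Rightarrow> 'a \<Rightarrow> enat) \<Rightarrow> 'a \<Rightarrow> int \<Rightarrow> ('a + nat) set" where
  "gens V M s1 n = (if n < 0 then Inl ` {a \<in> V. a \<noteq> s1 \<and> M a s1 < 3}
      else Inl ` (V - {s1}) \<union> Inr ` {k. 1 \<le> k \<and> int k \<le> n})"

end

theory Submission
  imports Defs Complex_Main
begin


locale cox =
  fixes S :: "'g set" and M :: "'g \<Rightarrow> 'g \<Rightarrow> enat"
  assumes finS: "finite S"
  and diag: "s \<in> S \<Longrightarrow> M s s = 1"
  and symm: "s \<in> S \<Longrightarrow> t \<in> S \<Longrightarrow> M s t = M t s"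
  and offd: "s \<in> S \<Longrightarrow> t \<in> S \<Longrightarrow> s \<noteq> t \<Longrightarrow> M s t \<ge> 2"
begin

abbreviation E where "E \<equiv> cox_eq S M"

lemma E_refl[intro]: "E x x" by (rule cox_eq.refl)
lemma E_sym: "E x y \<Longrightarrow> E y x" by (rule cox_eq.sym)
lemma E_trans: "E x y \<Longrightarrow> E y z \<Longrightarrow> E x z" by (rule cox_eq.trans)
lemma E_ctxt: "E x y \<Longrightarrow> E (u@x@v) (u@y@v)" by (rule cox_eq.ctxt)
lemma E_app: "E x y \<Longrightarrow> E u v \<Longrightarrow> E (x@u) (y@v)"
proof -
  assume a: "E x y" "E u v"
  have "E ([]@x@u) ([]@y@u)" by (rule E_ctxt[OF a(1)])
  moreover have "E (y@u@[]) (y@v@[])" by (rule E_ctxt[OF a(2)])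
  ultimately show ?thesis by (auto intro: E_trans)
qed
lemma E_appL: "E x y \<Longrightarrow> E (u@x) (u@y)" using E_app[of u u x y] by auto
lemma E_appR: "E x y \<Longrightarrow> E (x@u) (y@u)" using E_app[of x y u u] by auto

lemma E_ss: "s \<in> S \<Longrightarrow> E [s,s] []"
  using cox_eq.rel[of s S s M 1] diag[of s] by (simp add: one_enat_def)

lemma E_inv: "p \<in> lists S \<Longrightarrow> E (p @ rev p) []"
proof (induction p)
  case Nil then show ?case by auto
next
  case (Cons a p)
  have "E ([a] @ (p @ rev p) @ [a]) ([a] @ [] @ [a])" using Cons by (intro E_ctxt) auto
  then have "E (a # p @ rev p @ [a]) [a,a]" by simp
  with E_ss[of a] Cons show ?case by (auto intro: E_trans)
qed

lemma E_inv': "p \<in> lists S \<Longrightarrow> E (rev p @ p) []"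
  using E_inv[of "rev p"] by (auto simp: in_lists_conv_set)

lemma cancel1: "p \<in> lists S \<Longrightarrow> E (x @ p @ rev p @ z) (x @ z)"
  using E_ctxt[OF E_inv[of p], of x z] by simp
lemma cancel2: "p \<in> lists S \<Longrightarrow> E (x @ rev p @ p @ z) (x @ z)"
  using E_ctxt[OF E_inv'[of p], of x z] by simp

lemma rep_comm: "concat (replicate k xs) @ xs = xs @ concat (replicate k xs)"
  by (induction k) auto
lemma rev_rep: "rev (concat (replicate k [s,t])) = concat (replicate k [t,s])"
  by (induction k) (auto simp: rep_comm[of _ "[t,s]", simplified])

lemma E_rev: "E x y \<Longrightarrow> E (rev x) (rev y)"
proof (induction rule: cox_eq.induct)
  case (rel s t k)
  then show ?case using cox_eq.rel[of t S s M k] symm[of s t] by (simp add: rev_rep)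
next
  case (ctxt x y u v)
  then show ?case using E_ctxt[of "rev x" "rev y" "rev v" "rev u"] by simp
qed (auto intro: E_sym E_trans)

lemma E_conj_iff:
  assumes "p \<in> lists S"
  shows "E (rev p @ r @ p) [a] \<longleftrightarrow> E r (p @ [a] @ rev p)"
proof
  assume h: "E (rev p @ r @ p) [a]"
  have "E (p @ (rev p @ r @ p) @ rev p) (p @ [a] @ rev p)" by (rule E_ctxt[OF h])
  moreover have "E (p @ (rev p @ r @ p) @ rev p) r"
  proof -
    have "E ([] @ p @ rev p @ (r @ p @ rev p)) ([] @ (r @ p @ rev p))" by (rule cancel1[OF assms])
    moreover have "E (r @ p @ rev p @ []) (r @ [])" by (rule cancel1[OF assms])
    ultimately show ?thesis by (auto intro: E_trans)
  qed
  ultimately show "E r (p @ [a] @ rev p)" by (auto intro: E_trans E_sym)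
next
  assume h: "E r (p @ [a] @ rev p)"
  have "E (rev p @ r @ p) (rev p @ (p @ [a] @ rev p) @ p)" by (rule E_ctxt[OF h])
  moreover have "E (rev p @ (p @ [a] @ rev p) @ p) [a]"
  proof -
    have "E ([] @ rev p @ p @ ([a] @ rev p @ p)) ([] @ ([a] @ rev p @ p))" by (rule cancel2[OF assms])
    moreover have "E ([a] @ rev p @ p @ []) ([a] @ [])" by (rule cancel2[OF assms])
    ultimately show ?thesis by (auto intro: E_trans)
  qed
  ultimately show "E (rev p @ r @ p) [a]" by (auto intro: E_trans)
qed

primrec nw :: "'g list \<Rightarrow> 'g list \<Rightarrow> bool" where
  "nw [] r = False"
| "nw (s#w) r = (E r [s] \<noteq> nw w (s # r @ [s]))"

definition qw :: "'g list \<Rightarrow> nat \<Rightarrow> 'g list" where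
  "qw w j = take j w @ [w!j] @ rev (take j w)"

lemma nw_resp: "E r r' \<Longrightarrow> nw w r = nw w r'"
proof (induction w arbitrary: r r')
  case Nil then show ?case by simp
next
  case (Cons s w)
  have "E ([s] @ r @ [s]) ([s] @ r' @ [s])" by (rule E_ctxt[OF Cons.prems])
  then have "nw w (s # r @ [s]) = nw w (s # r' @ [s])" using Cons.IH by simp
  moreover have "E r [s] = E r' [s]" using Cons.prems by (auto intro: E_trans E_sym)
  ultimately show ?case by simp
qed

lemma nw_append: "nw (u@x) r = (nw u r \<noteq> nw x (rev u @ r @ u))"
  by (induction u arbitrary: r) auto

lemma nw_closed:
  assumes "w \<in> lists S"
  shows "nw w r = odd (length (filter (\<lambda>j. E r (qw w j)) [0..<length w]))"
  using assms
proof (induction w rule: rev_induct)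
  case Nil then show ?case by simp
next
  case (snoc a w)
  have wS: "w \<in> lists S" using snoc.prems by auto
  have 1: "nw (w@[a]) r = (nw w r \<noteq> E (rev w @ r @ w) [a])" by (simp add: nw_append)
  have 2: "E (rev w @ r @ w) [a] = E r (qw (w@[a]) (length w))"
    using E_conj_iff[OF wS] by (simp add: qw_def)
  have 3: "filter (\<lambda>j. E r (qw (w@[a]) j)) [0..<length w] = filter (\<lambda>j. E r (qw w j)) [0..<length w]"
    by (rule filter_cong) (auto simp: qw_def nth_append)
  show ?case using 1 2 3 snoc.IH[OF wS] by simp
qed

definition alt :: "'g \<Rightarrow> 'g \<Rightarrow> nat \<Rightarrow> 'g list" where
  "alt s t n = map (\<lambda>l. if even l then s else t) [0..<n]"

lemma length_alt[simp]: "length (alt s t n) = n" by (simp add: alt_def)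
lemma nth_alt[simp]: "i < n \<Longrightarrow> alt s t n ! i = (if even i then s else t)" by (simp add: alt_def)

lemma alt_rep: "concat (replicate k [s,t]) = alt s t (2*k)"
proof (induction k)
  case 0 then show ?case by (simp add: alt_def)
next
  case (Suc k)
  have "concat (replicate (Suc k) [s,t]) = concat (replicate k [s,t]) @ [s,t]"
    using rep_comm[of k "[s,t]"] by simp
  also have "\<dots> = alt s t (2*Suc k)" using Suc by (simp add: alt_def)
  finally show ?case .
qed

lemma alt_add: "even a \<Longrightarrow> alt s t (a + b) = alt s t a @ alt s t b"
  by (rule nth_equalityI) (auto simp: alt_def nth_append)

lemma qw_alt:
  assumes "j < n" shows "qw (alt s t n) j = alt s t (2*j+1)"
proof -
  have tk: "take j (alt s t n) = alt s t j" using assms by (simp add: alt_def take_map)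
  have nj: "alt s t n ! j = (if even j then s else t)" using assms by (simp add: alt_def)
  have len: "length (qw (alt s t n) j) = length (alt s t (2*j+1))"
    using assms by (simp add: qw_def tk alt_def)
  show ?thesis
  proof (rule nth_equalityI[OF len])
    fix i assume "i < length (qw (alt s t n) j)"
    then have i: "i < 2*j+1" using len by (simp add: alt_def)
    consider "i < j" | "i = j" | "j < i" by arith
    then show "qw (alt s t n) j ! i = alt s t (2*j+1) ! i"
    proof cases
      case 1 then show ?thesis using i by (simp add: qw_def tk nth_append)
    next
      case 2 then show ?thesis using i by (simp add: qw_def tk nj nth_append)
    next
      case 3
      have "qw (alt s t n) j ! i = alt s t j ! (2*j - i)"
        using 3 i by (simp add: qw_def tk nth_append rev_nth)
      also have "\<dots> = alt s t (2*j+1) ! i"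
        using 3 i by (simp add: even_diff_nat)
      finally show ?thesis .
    qed
  qed
qed

lemma nw_rel:
  assumes "s \<in> S" "t \<in> S" "M s t = enat k"
  shows "\<not> nw (concat (replicate k [s,t])) r"
proof -
  have sS: "alt s t n \<in> lists S" for n using assms by (auto simp: alt_def)
  have Ek: "E (alt s t (2*k)) []" using cox_eq.rel[of s S t M k] assms alt_rep by simp
  let ?P = "\<lambda>j. E r (qw (alt s t (2*k)) j)"
  have P: "?P j = E r (alt s t (2*j+1))" if "j < 2*k" for j using qw_alt that by simp
  have per: "E r (alt s t (2*(j+k)+1)) = E r (alt s t (2*j+1))" for j
  proof -
    have "alt s t (2*(j+k)+1) = alt s t (2*k) @ alt s t (2*j+1)"
      using alt_add[of "2*k" s t "2*j+1"] by (simp add: algebra_simps)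
    moreover have "E ([] @ alt s t (2*k) @ alt s t (2*j+1)) ([] @ [] @ alt s t (2*j+1))"
      by (rule E_ctxt[OF Ek])
    ultimately show ?thesis by (auto intro: E_trans E_sym)
  qed
  have per': "E r (alt s t (Suc (2*j + 2*k))) = E r (alt s t (Suc (2*j)))" for j
    using per[of j] by (simp add: algebra_simps)
  have up: "[0..<2*k] = [0..<k] @ map (\<lambda>j. j + k) [0..<k]"
    by (simp add: map_add_upt upt_add_eq_append[of 0 k k, simplified] mult_2)
  have "filter ?P [0..<2*k] = filter (\<lambda>j. E r (alt s t (2*j+1))) [0..<2*k]"
    by (rule filter_cong) (auto simp: P)
  also have "length \<dots> = 2 * length (filter (\<lambda>j. E r (alt s t (2*j+1))) [0..<k])"
    unfolding up by (simp add: filter_map o_def per')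
  finally show ?thesis
    using nw_closed[OF sS[of "2*k"]] alt_rep[of k s t] by (simp add: alt_def)
qed

lemma nw_cong: "E w v \<Longrightarrow> nw w = nw v"
proof (induction rule: cox_eq.induct)
  case (rel s t k)
  show ?case using nw_rel[OF rel] by (auto simp: fun_eq_iff)
next
  case (ctxt x y u v)
  show ?case
  proof
    fix r
    have "E (rev x @ (rev u @ r @ u) @ x) (rev y @ (rev u @ r @ u) @ y)"
      using E_app[OF E_rev[OF ctxt.hyps] E_refl] E_app[OF E_refl ctxt.hyps]
      by (meson E_app E_rev E_refl ctxt.hyps)
    then show "nw (u @ x @ v) r = nw (u @ y @ v) r"
      using nw_resp by (simp add: nw_append ctxt.IH)
  qed
qed auto

lemma E_ss_ctxt: "y \<in> S \<Longrightarrow> E (X @ [y,y] @ Z) (X @ Z)"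
  using E_ctxt[OF E_ss[of y], of X Z] by simp

lemma pal_inv:
  assumes "p \<in> lists S" "a \<in> S"
  shows "E ((p@[a]@rev p) @ (p@[a]@rev p)) []"
proof -
  have "E ((p@[a]) @ rev p @ p @ ([a]@rev p)) ((p@[a]) @ ([a]@rev p))" by (rule cancel2[OF assms(1)])
  then have 1: "E ((p@[a]@rev p) @ (p@[a]@rev p)) (p @ [a,a] @ rev p)" by simp
  have 2: "E (p @ [a,a] @ rev p) (p @ rev p)" by (rule E_ss_ctxt[OF assms(2)])
  show ?thesis using 1 2 E_inv[OF assms(1)] by (auto intro: E_trans)
qed

lemma qw_lists: "w \<in> lists T \<Longrightarrow> j < length w \<Longrightarrow> qw w j \<in> lists T"
  by (auto simp: qw_def in_lists_conv_set dest: in_set_takeD)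

lemma deletion:
  assumes wS: "w \<in> lists S" and ij: "i < j" "j < length w" and eq: "E (qw w i) (qw w j)"
  shows "E w (take i w @ take (j-i-1) (drop (i+1) w) @ drop (j+1) w)"
proof -
  define a where "a = take i w"
  define x where "x = w!i"
  define b where "b = take (j-i-1) (drop (i+1) w)"
  define y where "y = w!j"
  define c where "c = drop (j+1) w"
  have wdec: "w = a @ [x] @ b @ [y] @ c"
  proof -
    have "w = take i w @ [w!i] @ drop (i+1) w" using ij by (simp add: id_take_nth_drop)
    moreover have "drop (i+1) w = b @ [y] @ c"
    proof -
      have "drop (i+1) w = take (j-i-1) (drop (i+1) w) @ [drop (i+1) w ! (j-i-1)] @ drop (j-i) (drop (i+1) w)"
        using ij id_take_nth_drop[of "j-i-1" "drop (i+1) w"] by simp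
      moreover have "drop (i+1) w ! (j-i-1) = y" using ij by (simp add: y_def)
      moreover have "drop (j-i) (drop (i+1) w) = c" using ij by (simp add: c_def)
      ultimately show ?thesis by (simp add: b_def)
    qed
    ultimately show ?thesis by (simp add: a_def x_def)
  qed
  have tj: "take j w = a @ [x] @ b"
  proof -
    have l: "length (a @ [x] @ b) = j" using ij by (simp add: a_def b_def)
    have "w = (a@[x]@b) @ ([y]@c)" using wdec by simp
    then have "take (length (a @ [x] @ b)) w = a@[x]@b" by (metis append_eq_conv_conj)
    then show ?thesis using l by simp
  qed
  have qi: "qw w i = a @ [x] @ rev a" by (simp add: qw_def a_def x_def)
  have qj: "qw w j = (a@[x]@b) @ [y] @ rev (a@[x]@b)" by (simp add: qw_def tj y_def)
  have set_sub: "set a \<subseteq> S" "x \<in> S" "set b \<subseteq> S" "y \<in> S" "set c \<subseteq> S"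
    using wS by (auto simp: wdec)
  then have aS: "a \<in> lists S" and bS: "b \<in> lists S" and abS: "a@[x]@b \<in> lists S"
    by auto
  have S1: "E (qw w j @ qw w j @ w) w"
    using E_appR[OF pal_inv[OF abS set_sub(4)], of w] qj by simp
  have S2: "E (qw w i @ qw w j @ w) (qw w j @ qw w j @ w)"
    using E_appR[OF eq, of "qw w j @ w"] by simp
  have S3: "E (qw w j @ w) (a@[x]@b@c)"
  proof -
    have "E ((a@[x]@b@[y]) @ rev (a@[x]@b) @ (a@[x]@b) @ ([y]@c)) ((a@[x]@b@[y]) @ ([y]@c))"
      by (rule cancel2[OF abS])
    moreover have "qw w j @ w = (a@[x]@b@[y]) @ rev (a@[x]@b) @ (a@[x]@b) @ ([y]@c)"
      unfolding qj by (subst wdec) simp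
    ultimately have 1: "E (qw w j @ w) ((a@[x]@b) @ [y,y] @ c)" by simp
    have 2: "E ((a@[x]@b) @ [y,y] @ c) ((a@[x]@b) @ c)" by (rule E_ss_ctxt[OF set_sub(4)])
    from 1 2 show ?thesis by (auto intro: E_trans)
  qed
  have S4: "E (qw w i @ (a@[x]@b@c)) (a@b@c)"
  proof -
    have "E ((a@[x]) @ rev a @ a @ ([x]@b@c)) ((a@[x]) @ ([x]@b@c))" by (rule cancel2[OF aS])
    then have 1: "E (qw w i @ (a@[x]@b@c)) (a @ [x,x] @ (b@c))" by (simp add: qi)
    have 2: "E (a @ [x,x] @ (b@c)) (a @ (b@c))" by (rule E_ss_ctxt[OF set_sub(2)])
    from 1 2 show ?thesis by (auto intro: E_trans)
  qed
  have "E w (qw w i @ qw w j @ w)" using S1 S2 by (auto intro: E_trans E_sym)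
  moreover have "E (qw w i @ qw w j @ w) (qw w i @ (a@[x]@b@c))" using E_appL[OF S3] by simp
  ultimately have "E w (a@b@c)" using S4 by (auto intro: E_trans)
  then show ?thesis by (simp add: a_def b_def c_def)
qed

lemma nw_true_ex:
  assumes "w \<in> lists S" "nw w r" shows "\<exists>j<length w. E r (qw w j)"
proof -
  have "filter (\<lambda>j. E r (qw w j)) [0..<length w] \<noteq> []"
    using nw_closed[OF assms(1), of r] assms(2) by auto
  then show ?thesis by (auto simp: filter_empty_conv)
qed

lemma comm_list: "(\<And>a. a \<in> set d \<Longrightarrow> E [k,a] [a,k]) \<Longrightarrow> E (k#d) (d@[k])"
proof (induction d)
  case Nil then show ?case by auto
next
  case (Cons a d)
  have 1: "E ([] @ [k,a] @ d) ([] @ [a,k] @ d)" by (rule E_ctxt) (use Cons in auto)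
  have 2: "E ([a] @ (k#d) @ []) ([a] @ (d@[k]) @ [])" by (rule E_ctxt) (use Cons in auto)
  from 1 2 show ?case by (auto intro: E_trans)
qed

lemma main_abs:
  assumes IS: "I \<subseteq> S" "K \<subseteq> I" "K \<subseteq> J" "J \<subseteq> S" and dS: "d \<in> lists S"
  and comm: "\<And>k a. k \<in> K \<Longrightarrow> a \<in> set d \<Longrightarrow> E [k,a] [a,k]"
  and H3: "\<And>j v. j < length d \<Longrightarrow> v \<in> lists I \<Longrightarrow> \<not> E (qw d j) v"
  and H4: "\<And>s v. s \<in> I \<Longrightarrow> s \<notin> K \<Longrightarrow> v \<in> lists J \<Longrightarrow> \<not> E (rev d @ [s] @ d) v"
  shows "w \<in> lists I \<Longrightarrow> u \<in> lists J \<Longrightarrow> E (w@d) (d@u) \<Longrightarrow> \<exists>w'\<in>lists K. E w w'"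
proof (induction "length w" arbitrary: w u rule: less_induct)
  case less
  have wS: "w \<in> lists S" using less.prems IS by auto
  show ?case
  proof (cases "\<exists>w2\<in>lists I. length w2 < length w \<and> E w w2")
    case True
    then obtain w2 where w2: "w2 \<in> lists I" "length w2 < length w" "E w w2" by blast
    have "E (w2@d) (d@u)" using E_appR[OF E_sym[OF w2(3)], of d] less.prems(3) by (auto intro: E_trans)
    then obtain w' where "w' \<in> lists K" "E w2 w'" using less.hyps[OF w2(2) w2(1) less.prems(2)] by blast
    then show ?thesis using w2(3) by (auto intro: E_trans)
  next
    case False
    note minimal = False
    show ?thesis
    proof (cases w)
      case Nil then show ?thesis by auto
    next
      case (Cons s w1)
      have sI: "s \<in> I" and w1I: "w1 \<in> lists I" using less.prems Cons by auto
      have q0: "qw w 0 = [s]" by (simp add: qw_def Cons)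
      have noq: "\<not> E [s] (qw w j)" if "0 < j" "j < length w" for j
      proof
        assume "E [s] (qw w j)"
        then have "E w (take 0 w @ take (j-0-1) (drop (0+1) w) @ drop (j+1) w)"
          using deletion[OF wS that] q0 by simp
        moreover have "take 0 w @ take (j-0-1) (drop (0+1) w) @ drop (j+1) w \<in> lists I"
          using less.prems(1) by (auto simp: in_lists_conv_set dest: in_set_takeD in_set_dropD)
        moreover have "length (take 0 w @ take (j-0-1) (drop (0+1) w) @ drop (j+1) w) < length w"
          using that by simp
        ultimately show False using minimal by blast
      qed
      have filt: "filter (\<lambda>j. E [s] (qw w j)) [0..<length w] = [0]"
      proof -
        have "[0..<length w] = 0 # [1..<length w]" using Cons by (simp add: upt_rec)
        moreover have "filter (\<lambda>j. E [s] (qw w j)) [1..<length w] = []"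
          using noq by (auto simp: filter_empty_conv)
        ultimately show ?thesis using q0 by auto
      qed
      have nws: "nw w [s]" using nw_closed[OF wS, of "[s]"] filt by simp
      show ?thesis
      proof (cases "s \<in> K")
        case True
        have sS: "s \<in> S" using sI IS by auto
        have "E ([s] @ (s#w1@d) @ []) ([s] @ (d@u) @ [])"
          using E_ctxt[of "s#w1@d" "d@u" "[s]" "[]"] less.prems(3) Cons by simp
        moreover have "E ([] @ [s,s] @ (w1@d)) ([] @ (w1@d))" by (rule E_ss_ctxt[OF sS])
        ultimately have 1: "E (w1@d) ((s#d)@u)" by (auto intro: E_trans E_sym)
        have 2: "E ((s#d)@u) ((d@[s])@u)" by (rule E_appR[OF comm_list]) (use comm True in auto)
        have "E (w1@d) (d@(s#u))" using 1 2 by (auto intro: E_trans)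
        moreover have "s#u \<in> lists J" using less.prems(2) True IS by auto
        ultimately have "\<exists>x\<in>lists K. E w1 x"
          using less.hyps[of w1 "s#u"] w1I Cons by auto
        then obtain w' where "w' \<in> lists K" "E w1 w'" by blast
        then have "s#w' \<in> lists K" "E w (s#w')" using True Cons E_appL[of w1 w' "[s]"] by auto
        then show ?thesis by blast
      next
        case False
        have nd: "\<not> nw d R" if "R \<in> lists I" for R
        proof
          assume "nw d R"
          then obtain j where "j < length d" "E R (qw d j)" using nw_true_ex[OF dS] by blast
          then show False using H3[of j R] that by (auto intro: E_sym)
        qed
        have "rev w @ [s] @ w \<in> lists I" using less.prems(1) sI by auto
        then have "nw (w@d) [s]" using nws nd by (simp add: nw_append)
        then have "nw (d@u) [s]" using nw_cong[OF less.prems(3)] by simp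
        moreover have "\<not> nw d [s]" using nd sI by simp
        ultimately have "nw u (rev d @ [s] @ d)" by (simp add: nw_append)
        moreover have uS: "u \<in> lists S" using less.prems(2) IS by auto
        ultimately obtain j where "j < length u" "E (rev d @ [s] @ d) (qw u j)"
          using nw_true_ex by blast
        moreover have "qw u j \<in> lists J" using qw_lists less.prems(2) \<open>j < length u\<close> by blast
        ultimately show ?thesis using H4[OF sI False] by blast
      qed
    qed
  qed
qed

end



lemma step_alg:
  fixes s X Y A B C c uu ww :: real
  assumes "s*X = A*((4*c^2-1)*uu - 2*c*ww) - B*uu" "s*Y = A*(2*c*uu - ww) - B*ww"
    "C = (4*c^2-2)*A - B"
  shows "s*((4*c^2-1)*X - 2*c*Y) = C*((4*c^2-1)*uu - 2*c*ww) - A*uu \<and> s*(2*c*X - Y) = C*(2*c*uu - ww) - A*ww"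
  using assms by algebra

lemma dihedral_alg:
  fixes c a0 b0 :: real and m :: nat
  assumes m2: "m \<ge> 2" and c: "c = cos (pi / real m)"
  defines "F \<equiv> (\<lambda>z::real\<times>real. (-(fst z) - 2*a0 + 2*c*(-(snd z) - 2*b0 + 2*c*fst z),
                                  -(snd z) - 2*b0 + 2*c*fst z))"
  shows "(F^^m) (0,0) = (0,0)"
proof -
  have mpos: "real m > 0" using m2 by simp
  have x0: "0 < pi / real m" using mpos by simp
  have x1: "pi / real m < pi" using m2 by (simp add: divide_less_eq)
  have sinpos: "sin (pi / real m) > 0" by (rule sin_gt_zero[OF x0 x1])
  have cs: "1 - c\<^sup>2 = (sin (pi / real m))\<^sup>2" using c by (simp add: sin_squared_eq)
  have nz: "1 - c\<^sup>2 \<noteq> 0" using cs sinpos by simp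
  define ps where "ps = -(a0 + c*b0)/(1-c\<^sup>2)"
  define qs where "qs = c*ps - b0"
  have fp: "ps = c*qs - a0" using nz by (simp add: ps_def qs_def field_simps power2_eq_square)
  define L where "L = (\<lambda>z::real\<times>real. ((4*c\<^sup>2-1)*fst z - 2*c*snd z, 2*c*fst z - snd z))"
  define D where "D j = (fst ((F^^j) (0,0)) - ps, snd ((F^^j) (0,0)) - qs)" for j
  have DS: "D (Suc j) = L (D j)" for j
    unfolding D_def L_def F_def using fp qs_def
    apply (simp add: power2_eq_square prod_eq_iff)
    apply algebra
    done
  have Dm: "D m = D 0"
  proof (cases "m = 2")
    case True
    then have "c = 0" using c by simp
    then show ?thesis using True DS[of 1] DS[of 0] by (simp add: L_def numeral_2_eq_2)
  next
    case False
    then have m3: "m \<ge> 3" using m2 by simp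
    define th where "th = 2*pi / real m"
    have th0: "0 < th" using mpos by (simp add: th_def)
    have th1: "th < pi" using m3 by (simp add: th_def divide_less_eq)
    have sth: "sin th > 0" by (rule sin_gt_zero[OF th0 th1])
    have tau: "2 * cos th = 4*c\<^sup>2 - 2"
      using cos_double[of "pi / real m"] sin_squared_eq[of "pi/real m"] c
      by (simp add: th_def algebra_simps)
    have trig: "sin ((real j + 1) * th) = 2 * cos th * sin (real j * th) - sin ((real j - 1) * th)" for j
      using sin_add[of "real j * th" th] sin_diff[of "real j * th" th]
      by (simp add: algebra_simps)
    have LL: "L (L z) = ((4*c\<^sup>2-2) * fst (L z) - fst z, (4*c\<^sup>2-2) * snd (L z) - snd z)" for z
      by (simp add: L_def power2_eq_square algebra_simps)
    have key: "sin th * fst (D j) = sin (real j * th) * fst (L (D 0)) - sin ((real j - 1) * th) * fst (D 0)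
             \<and> sin th * snd (D j) = sin (real j * th) * snd (L (D 0)) - sin ((real j - 1) * th) * snd (D 0)" for j
    proof (induction j)
      case 0 then show ?case by simp
    next
      case (Suc j)
      obtain u0 w0 where d0: "D 0 = (u0, w0)" by fastforce
      have t: "sin ((real j + 1) * th) = (4*c\<^sup>2 - 2) * sin (real j * th) - sin ((real j - 1) * th)"
        using trig[of j] tau by simp
      have e1: "real (Suc j) = real j + 1" "real (Suc j) - 1 = real j" by simp_all
      show ?case
        using step_alg[where s="sin th" and X="fst (D j)" and Y="snd (D j)" and A="sin (real j * th)"
           and B="sin ((real j - 1) * th)" and C="sin ((real j + 1) * th)" and c=c and uu=u0 and ww=w0] Suc.IH t
        unfolding DS e1 by (simp add: d0 L_def)
    qed
    have s2: "sin (real m * th) = 0" using mpos by (simp add: th_def)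
    have s3: "sin ((real m - 1) * th) = - sin th"
    proof -
      have "(real m - 1) * th = 2*pi - th" using mpos by (simp add: th_def field_simps)
      then show ?thesis by (simp add: sin_diff)
    qed
    from key[of m] have "sin th * fst (D m) = sin th * fst (D 0)" "sin th * snd (D m) = sin th * snd (D 0)"
      using s2 s3 by simp_all
    then show ?thesis using sth by (simp add: prod_eq_iff)
  qed
  then show ?thesis by (simp add: D_def prod_eq_iff)
qed




context cox begin

definition Bm :: "'g \<Rightarrow> 'g \<Rightarrow> real" where
  "Bm g h = (case M g h of enat m \<Rightarrow> - cos (pi / real m) | \<infinity> \<Rightarrow> -1)"
definition Bf :: "'g \<Rightarrow> ('g \<Rightarrow> real) \<Rightarrow> real" where
  "Bf g x = (\<Sum>h\<in>S. Bm g h * x h)"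
definition rf :: "'g \<Rightarrow> ('g \<Rightarrow> real) \<Rightarrow> ('g \<Rightarrow> real)" where
  "rf g x = (\<lambda>h. x h - (if h = g then 2 * Bf g x else 0))"
primrec sig :: "'g list \<Rightarrow> ('g \<Rightarrow> real) \<Rightarrow> ('g \<Rightarrow> real)" where
  "sig [] x = x"
| "sig (g#w) x = rf g (sig w x)"
definition dl :: "'g \<Rightarrow> 'g \<Rightarrow> real" where
  "dl a = (\<lambda>h. if h = a then 1 else 0)"

lemma Bf_dl: "a \<in> S \<Longrightarrow> (\<Sum>h\<in>S. Bm g h * dl a h) = Bm g a"
proof -
  assume a: "a \<in> S"
  have "(\<Sum>h\<in>S. Bm g h * dl a h) = (\<Sum>h\<in>S. if h = a then Bm g a else 0)"
    by (rule sum.cong) (auto simp: dl_def)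
  then show ?thesis using a finS by simp
qed

lemma Bf_lin2:
  assumes "a \<in> S" "b \<in> S"
  shows "Bf g (\<lambda>h. x h + p * dl a h + q * dl b h) = Bf g x + p * Bm g a + q * Bm g b"
proof -
  have "(\<lambda>h. Bm g h * (x h + p * dl a h + q * dl b h)) = (\<lambda>h. Bm g h * x h + p * (Bm g h * dl a h) + q * (Bm g h * dl b h))"
    by (auto simp: algebra_simps fun_eq_iff)
  have "Bf g (\<lambda>h. x h + p * dl a h + q * dl b h) = (\<Sum>h\<in>S. Bm g h * x h + p * (Bm g h * dl a h) + q * (Bm g h * dl b h))"
    unfolding Bf_def by (rule sum.cong) (auto simp: algebra_simps)
  also have "\<dots> = (\<Sum>h\<in>S. Bm g h * x h) + p * (\<Sum>h\<in>S. Bm g h * dl a h) + q * (\<Sum>h\<in>S. Bm g h * dl b h)"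
    by (simp add: sum.distrib sum_distrib_left)
  finally show ?thesis by (simp add: Bf_dl assms Bf_def)
qed

lemma Bf_scale: "Bf g (\<lambda>h. k * x h) = k * Bf g x"
  unfolding Bf_def by (simp add: sum_distrib_left algebra_simps)

lemma Bm_diag: "s \<in> S \<Longrightarrow> Bm s s = 1"
  using diag[of s] by (simp add: Bm_def one_enat_def)

lemma sig_append: "sig (u@v) x = sig u (sig v x)"
  by (induction u) auto

lemma sig_scale: "sig w (\<lambda>h. k * x h) = (\<lambda>h. k * sig w x h)"
  by (induction w) (auto simp: rf_def Bf_scale algebra_simps)

lemma sig_neg: "sig w (\<lambda>h. - x h) = (\<lambda>h. - sig w x h)"
  using sig_scale[of w "-1" x] by simp

lemma sig_coord: "u \<notin> set w \<Longrightarrow> sig w x u = x u"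
  by (induction w) (auto simp: rf_def)

lemma rf_Y:
  assumes "a \<in> S" "b \<in> S" "g \<in> {a,b}" "a \<noteq> b"
  shows "rf g (\<lambda>h. x h + p * dl a h + q * dl b h) =
    (\<lambda>h. x h + (if g = a then p - 2 * (Bf g x + p * Bm g a + q * Bm g b) else p) * dl a h
             + (if g = b then q - 2 * (Bf g x + p * Bm g a + q * Bm g b) else q) * dl b h)"
  unfolding rf_def Bf_lin2[OF assms(1,2)] using assms by (auto simp: dl_def fun_eq_iff algebra_simps)

lemma sig_rel:
  assumes sS: "s \<in> S" and tS: "t \<in> S" and k: "M s t = enat k"
  shows "sig (concat (replicate k [s,t])) x = x"
proof (cases "s = t")
  case True
  then have k1: "k = 1" using diag[OF sS] k by (simp add: one_enat_def)
  have e: "x = (\<lambda>h. x h + 0 * dl s h + 0 * dl s h)" by simp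
  have "rf s x = (\<lambda>h. x h + (- 2 * Bf s x) * dl s h + 0 * dl s h)"
    by (auto simp: rf_def dl_def fun_eq_iff)
  moreover have "rf s (\<lambda>h. x h + (- 2 * Bf s x) * dl s h + 0 * dl s h) = x"
    using Bf_lin2[OF sS sS, of s x "- 2 * Bf s x" 0] Bm_diag[OF sS]
    by (auto simp: rf_def dl_def fun_eq_iff)
  ultimately show ?thesis using True k1 by simp
next
  case False
  have k2: "k \<ge> 2" using offd[OF sS tS False] k by (simp add: numeral_eq_enat)
  define c where "c = cos (pi / real k)"
  have Bst: "Bm s t = - c" "Bm t s = - c" using k symm[OF sS tS] by (simp_all add: Bm_def c_def)
  have Bss: "Bm s s = 1" "Bm t t = 1" using Bm_diag sS tS by auto
  define a0 where "a0 = Bf s x"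
  define b0 where "b0 = Bf t x"
  define F where "F \<equiv> (\<lambda>z::real\<times>real. (-(fst z) - 2*a0 + 2*c*(-(snd z) - 2*b0 + 2*c*fst z),
                                  -(snd z) - 2*b0 + 2*c*fst z))"
  define Y where "Y z = (\<lambda>h. x h + fst z * dl s h + snd z * dl t h)" for z :: "real \<times> real"
  have step: "sig [s,t] (Y z) = Y (F z)" for z
  proof -
    obtain p q where z: "z = (p,q)" by fastforce
    have 1: "rf t (Y z) = Y (p, -q - 2*b0 + 2*c*p)"
      using rf_Y[OF sS tS, of t x p q] False Bst Bss
      by (simp add: Y_def z b0_def algebra_simps)
    have 2: "rf s (Y (p, -q - 2*b0 + 2*c*p)) = Y (F z)"
      using rf_Y[OF sS tS, of s x p "-q - 2*b0 + 2*c*p"] False Bst Bss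
      by (simp add: Y_def z a0_def F_def algebra_simps)
    show ?thesis using 1 2 by simp
  qed
  have it: "sig (concat (replicate j [s,t])) x = Y ((F^^j) (0,0))" for j
  proof (induction j)
    case 0 then show ?case by (simp add: Y_def fun_eq_iff)
  next
    case (Suc j)
    have "sig (concat (replicate (Suc j) [s,t])) x = sig [s,t] (sig (concat (replicate j [s,t])) x)"
      using sig_append[of "[s,t]" "concat (replicate j [s,t])" x] by simp
    then show ?case using Suc step by simp
  qed
  have "(F^^k) (0,0) = (0,0)"
    unfolding F_def by (rule dihedral_alg[OF k2 c_def])
  then show ?thesis using it[of k] by (simp add: Y_def fun_eq_iff)
qed

lemma sig_cong: "E w v \<Longrightarrow> sig w = sig v"
proof (induction rule: cox_eq.induct)
  case (rel s t k)
  then show ?case using sig_rel by (auto simp: fun_eq_iff)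
next
  case (ctxt x y u v)
  have "sig x = sig y" using ctxt.IH by (auto simp: fun_eq_iff)
  then show ?case by (intro ext) (simp add: sig_append)
qed auto

lemma nonmem:
  assumes pS: "p \<in> lists S" and aS: "a \<in> S" and vT: "v \<in> lists T" and uT: "u \<notin> T"
    and nz: "sig p (dl a) u \<noteq> 0"
  shows "\<not> E (p@[a]@rev p) v"
proof
  assume e: "E (p@[a]@rev p) v"
  define \<beta> where "\<beta> = sig p (dl a)"
  have inv: "sig (rev p) (sig p y) = y" for y
    using sig_cong[OF E_inv'[OF pS]] sig_append[of "rev p" p y] by (simp add: fun_eq_iff)
  have ra: "rf a (dl a) = (\<lambda>h. (-1) * dl a h)"
    using Bf_lin2[OF aS aS, of a "\<lambda>_. 0" 1 0] Bm_diag[OF aS]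
    by (auto simp: rf_def dl_def fun_eq_iff Bf_def)
  have "sig (p@[a]@rev p) \<beta> = (\<lambda>h. (-1) * \<beta> h)"
    by (simp add: sig_append \<beta>_def inv ra sig_neg)
  moreover have "sig v \<beta> u = \<beta> u" using vT uT by (intro sig_coord) auto
  ultimately have "\<beta> u = - \<beta> u" using sig_cong[OF e] by (simp add: fun_eq_iff)
  then show False using nz \<beta>_def by simp
qed

lemma comm2:
  assumes sS: "s \<in> S" and tS: "t \<in> S" and m: "M s t = 2"
  shows "E [s,t] [t,s]"
proof -
  have r: "E [s,t,s,t] []" using cox_eq.rel[of s S t M 2] sS tS m by (simp add: numeral_eq_enat numeral_2_eq_2)
  have "E ([t,s] @ [s,t,s,t] @ []) ([t,s] @ [] @ [])" by (rule E_ctxt[OF r])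
  then have 1: "E [t,s,s,t,s,t] [t,s]" by simp
  have 2: "E ([t] @ [s,s] @ [t,s,t]) ([t] @ [t,s,t])" by (rule E_ss_ctxt[OF sS])
  have 3: "E ([] @ [t,t] @ [s,t]) ([] @ [s,t])" by (rule E_ss_ctxt[OF tS])
  from 1 2 3 show ?thesis by simp (meson E_sym E_trans)
qed

lemma comm_lists: "(\<And>k a. k \<in> set w \<Longrightarrow> a \<in> set d \<Longrightarrow> E [k,a] [a,k]) \<Longrightarrow> E (w@d) (d@w)"
proof (induction w)
  case Nil then show ?case by auto
next
  case (Cons k w)
  have 1: "E ([k] @ (w@d) @ []) ([k] @ (d@w) @ [])" by (rule E_ctxt) (use Cons in auto)
  have 2: "E ([] @ (k#d) @ w) ([] @ (d@[k]) @ w)" by (rule E_ctxt[OF comm_list]) (use Cons in auto)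
  from 1 2 show ?case by (auto intro: E_trans)
qed

lemma Bf_ind:
  assumes "s \<in> S" "A \<subseteq> S"
  shows "Bf g (\<lambda>h. dl s h + c * (if h \<in> A then 1 else 0)) = Bm g s + c * (\<Sum>h\<in>A. Bm g h)"
proof -
  have "Bf g (\<lambda>h. dl s h + c * (if h \<in> A then 1 else 0))
      = (\<Sum>h\<in>S. Bm g h * dl s h) + c * (\<Sum>h\<in>S. if h \<in> A then Bm g h else 0)"
  proof -
    have "(\<lambda>h. Bm g h * (dl s h + c * (if h \<in> A then 1 else 0))) = (\<lambda>h. Bm g h * dl s h + c * (if h \<in> A then Bm g h else 0))"
      by (auto simp: fun_eq_iff algebra_simps)
    then show ?thesis unfolding Bf_def by (simp only:) (simp add: sum.distrib sum_distrib_left)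
  qed
  also have "(\<Sum>h\<in>S. if h \<in> A then Bm g h else 0) = (\<Sum>h\<in>S \<inter> A. Bm g h)"
    using finS by (simp add: sum.inter_restrict)
  also have "S \<inter> A = A" using assms by auto
  finally show ?thesis using Bf_dl assms by simp
qed

end



lemma gens_nat: "gens V M s1 (int m) = Inl ` (V - {s1}) \<union> Inr ` {k. 1 \<le> k \<and> k \<le> m}"
  by (simp add: gens_def)
lemma gens_neg: "gens V M s1 (-1) = Inl ` {a\<in>V. a \<noteq> s1 \<and> M a s1 < 3}"
  by (simp add: gens_def)

locale inst =
  fixes V :: "'a set" and M :: "'a \<Rightarrow> 'a \<Rightarrow> enat" and s1 :: 'a and n i :: nat
  assumes finV: "finite V" and s1V: "s1 \<in> V" and cm: "coxeter_matrix V M"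
    and n1: "1 \<le> n" and i1: "1 \<le> i" and iN: "i \<le> n"
begin

lemma Mdiag: "a \<in> V \<Longrightarrow> M a a = 1" using cm by (simp add: coxeter_matrix_def)
lemma Msym: "a \<in> V \<Longrightarrow> b \<in> V \<Longrightarrow> M a b = M b a" using cm by (simp add: coxeter_matrix_def)
lemma Moff: "a \<in> V \<Longrightarrow> b \<in> V \<Longrightarrow> a \<noteq> b \<Longrightarrow> M a b \<ge> 2" using cm by (simp add: coxeter_matrix_def)

sublocale cox "gens V M s1 (int n)" "ext_M M s1"
proof
  show "finite (gens V M s1 (int n))"
    using finV by (simp add: gens_nat finite_subset[of "{k. 1 \<le> k \<and> k \<le> n}" "{..n}"])
next
  fix s assume "s \<in> gens V M s1 (int n)"
  then show "ext_M M s1 s s = 1" by (auto simp: gens_nat ext_M_def Mdiag)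
next
  fix s t assume "s \<in> gens V M s1 (int n)" "t \<in> gens V M s1 (int n)"
  then show "ext_M M s1 s t = ext_M M s1 t s" using s1V by (auto simp: gens_nat ext_M_def Msym split: if_splits; metis Msym s1V)
next
  fix s t assume "s \<in> gens V M s1 (int n)" "t \<in> gens V M s1 (int n)" "s \<noteq> t"
  then show "ext_M M s1 s t \<ge> 2" using s1V
    by (auto simp: gens_nat ext_M_def split: if_splits; metis Moff s1V)
qed


abbreviation "SS \<equiv> gens V M s1 (int n)"
abbreviation "MM \<equiv> ext_M M s1"
abbreviation "II \<equiv> gens V M s1 (int i - 1)"
abbreviation "JJ \<equiv> gens V M s1 (int n - 1)"
abbreviation "KK \<equiv> gens V M s1 (int i - 2)"
abbreviation "dd \<equiv> map Inr [i..<Suc n] :: ('a + nat) list"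

lemma I_eq: "II = Inl ` (V - {s1}) \<union> Inr ` {k. 1 \<le> k \<and> k \<le> i - 1}"
proof -
  have "int i - 1 = int (i - 1)" using i1 by simp
  then show ?thesis by (simp only: gens_nat)
qed
lemma J_eq: "JJ = Inl ` (V - {s1}) \<union> Inr ` {k. 1 \<le> k \<and> k \<le> n - 1}"
proof -
  have "int n - 1 = int (n - 1)" using n1 by simp
  then show ?thesis by (simp only: gens_nat)
qed
lemma K_eq: "KK = (if i = 1 then Inl ` {a\<in>V. a \<noteq> s1 \<and> M a s1 < 3}
                 else Inl ` (V - {s1}) \<union> Inr ` {k. 1 \<le> k \<and> k \<le> i - 2})"
proof (cases "i = 1")
  case True then show ?thesis by (simp add: gens_def)
next
  case False
  then have "int i - 2 = int (i - 2)" using i1 by simp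
  then show ?thesis using False by (simp only: gens_nat if_False)
qed

lemma S_eq: "SS = Inl ` (V - {s1}) \<union> Inr ` {k. 1 \<le> k \<and> k \<le> n}" by (simp add: gens_nat)

lemma subsets: "II \<subseteq> SS" "KK \<subseteq> II" "KK \<subseteq> JJ" "JJ \<subseteq> SS"
  using iN by (auto simp: I_eq J_eq K_eq S_eq split: if_splits)

lemma dS: "dd \<in> lists SS" using i1 by (auto simp: S_eq)

lemma Bm2: "MM g h = 2 \<Longrightarrow> Bm g h = 0"
  by (simp add: Bm_def numeral_eq_enat)
lemma Bm3: "MM g h = 3 \<Longrightarrow> Bm g h = - 1/2"
  by (simp add: Bm_def numeral_eq_enat cos_60)

lemma enat23: "(x::enat) < 3 \<Longrightarrow> 2 \<le> x \<Longrightarrow> x = 2"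
  by (cases x) (auto simp: numeral_eq_enat)

lemma commK: "k \<in> KK \<Longrightarrow> a \<in> set dd \<Longrightarrow> E [k,a] [a,k]"
proof -
  assume k: "k \<in> KK" and a: "a \<in> set dd"
  then obtain l where l: "a = Inr l" "i \<le> l" "l \<le> n" by auto
  have "MM k a = 2"
  proof (cases "i = 1")
    case True
    then obtain b where b: "k = Inl b" "b \<in> V" "b \<noteq> s1" "M b s1 < 3" using k by (auto simp: K_eq gens_neg)
    have "M b s1 = 2" using enat23[OF b(4) Moff[OF b(2) s1V b(3)]] .
    then show ?thesis using b l by (simp add: ext_M_def)
  next
    case False
    then show ?thesis using k l i1 by (auto simp: K_eq ext_M_def)
  qed
  moreover have "k \<in> SS" "a \<in> SS" using k a subsets dS by auto
  ultimately show ?thesis using comm2 by blast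
qed

lemma H3: "j < length dd \<Longrightarrow> v \<in> lists II \<Longrightarrow> \<not> E (qw dd j) v"
proof -
  assume j: "j < length dd" and v: "v \<in> lists II"
  have "take j [i..<Suc n] = [i..<i+j]" using j by (subst take_upt) (auto simp del: upt_Suc)
  then have tk: "take j dd = map Inr [i..<i+j]" by (simp add: take_map del: upt_Suc)
  have jj: "j < Suc n - i" using j by (simp only: length_map length_upt)
  have na: "[i..<Suc n] ! j = i + j" using jj by (intro nth_upt) linarith
  have nb: "dd ! j = Inr ([i..<Suc n] ! j)" using jj by (intro nth_map) (simp only: length_upt)
  have nj: "dd ! j = Inr (i+j)" using na nb by (simp only:)
  have "qw dd j = take j dd @ [Inr (i+j)] @ rev (take j dd)" unfolding qw_def nj by (simp del: upt_Suc)
  moreover have "\<not> E (take j dd @ [Inr (i+j)] @ rev (take j dd)) v"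
  proof (rule nonmem[OF _ _ v])
    show "take j dd \<in> lists SS" by (metis dS in_lists_conv_set in_set_takeD)
    show "Inr (i+j) \<in> SS" using jj i1 by (auto simp: S_eq)
    show "Inr (i+j) \<notin> II" by (auto simp: I_eq)
    have "sig (take j dd) (dl (Inr (i+j))) (Inr (i+j)) = dl (Inr (i+j)) (Inr (i+j))"
      by (rule sig_coord) (unfold tk, auto)
    then show "sig (take j dd) (dl (Inr (i+j))) (Inr (i+j)) \<noteq> 0" by (simp add: dl_def)
  qed
  ultimately show ?thesis by simp
qed


lemma chain:
  assumes sS: "s \<in> SS" and hB: "\<And>k. i \<le> k \<Longrightarrow> k < n \<Longrightarrow> Bm (Inr (Suc k)) s = 0"
  shows "i \<le> k \<Longrightarrow> k \<le> n \<Longrightarrow> sig (rev (map Inr [i..<Suc k])) (dl s)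
     = (\<lambda>h. dl s h + (-2 * Bm (Inr i) s) * (if h \<in> Inr ` {i..k} then 1 else 0))"
proof (induction k)
  case 0 then show ?case using i1 by simp
next
  case (Suc k)
  show ?case
  proof (cases "Suc k = i")
    case True
    have "Bf (Inr i) (dl s) = Bm (Inr i) s" using Bf_dl[OF sS] by (simp add: Bf_def)
    then show ?thesis using True[symmetric] by (auto simp: rf_def dl_def fun_eq_iff)
  next
    case False
    then have ik: "i \<le> k" "k < n" using Suc.prems by auto
    define c where "c = -2 * Bm (Inr i) s"
    define g :: "'a + nat" where "g = Inr (Suc k)"
    have IH: "sig (rev (map Inr [i..<Suc k])) (dl s) = (\<lambda>h. dl s h + c * (if h \<in> Inr ` {i..k} then 1 else 0))"
      using Suc.IH ik by (simp add: c_def)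
    have up: "rev (map Inr [i..<Suc (Suc k)]) = g # rev (map Inr [i..<Suc k])"
      using ik by (simp add: g_def)
    have sub: "Inr ` {i..k} \<subseteq> SS" using ik i1 by (auto simp: S_eq)
    have sum1: "(\<Sum>h\<in>Inr ` {i..k}. Bm g h) = (\<Sum>l\<in>{i..k}. Bm g (Inr l))"
      by (simp add: sum.reindex)
    have ins: "{i..k} = insert k {i..<k}" using ik by auto
    have z: "(\<Sum>l\<in>{i..<k}. Bm g (Inr l)) = 0"
      by (rule sum.neutral) (auto simp: g_def intro!: Bm2 simp: ext_M_def)
    have h: "Bm g (Inr k) = -1/2" by (rule Bm3) (simp add: g_def ext_M_def)
    have bf: "Bf g (\<lambda>h. dl s h + c * (if h \<in> Inr ` {i..k} then 1 else 0)) = - c / 2"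
      using Bf_ind[OF sS sub, of g c] hB[OF ik] sum1 ins z h by (simp add: g_def)
    show ?thesis
      unfolding up sig.simps IH c_def[symmetric]
      using bf ik by (auto simp: rf_def fun_eq_iff g_def)
  qed
qed

lemma sIK: "s \<in> II \<Longrightarrow> s \<notin> KK \<Longrightarrow>
   (i \<ge> 2 \<and> s = Inr (i-1)) \<or> (i = 1 \<and> (\<exists>a. s = Inl a \<and> a \<in> V \<and> a \<noteq> s1 \<and> \<not> M a s1 < 3))"
  using i1 by (cases "i = 1") (auto simp: I_eq K_eq gens_neg gens_def)

lemma H4: "s \<in> II \<Longrightarrow> s \<notin> KK \<Longrightarrow> v \<in> lists JJ \<Longrightarrow> \<not> E (rev dd @ [s] @ dd) v"
proof -
  assume sI: "s \<in> II" and sK: "s \<notin> KK" and v: "v \<in> lists JJ"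
  have sS: "s \<in> SS" using sI subsets by auto
  have hB: "Bm (Inr (Suc k)) s = 0" if "i \<le> k" "k < n" for k
    using sIK[OF sI sK] that by (auto intro!: Bm2 simp: ext_M_def)
  have cnz: "Bm (Inr i) s \<noteq> 0"
    using sIK[OF sI sK]
  proof
    assume h: "2 \<le> i \<and> s = Inr (i - 1)"
    then have "MM (Inr i) s = 3" by (auto simp: ext_M_def)
    then show ?thesis using Bm3[of "Inr i" s] by simp
  next
    assume "i = 1 \<and> (\<exists>a. s = Inl a \<and> a \<in> V \<and> a \<noteq> s1 \<and> \<not> M a s1 < 3)"
    then obtain a where a: "i = 1" "s = Inl a" "a \<in> V" "a \<noteq> s1" "\<not> M a s1 < 3" by blast
    have e: "MM (Inr i) s = M a s1" using a Msym[OF a(3) s1V] by (simp add: ext_M_def)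
    show ?thesis
    proof (cases "M a s1")
      case (enat m)
      then have m3: "m \<ge> 3" using a(5) by (simp add: numeral_eq_enat)
      have "0 < cos (pi / real m)"
        by (rule cos_gt_zero) (use m3 in \<open>auto simp: divide_less_eq\<close>)
      then show ?thesis using e enat by (simp add: Bm_def)
    next
      case infinity
      then show ?thesis using e by (simp add: Bm_def)
    qed
  qed
  have ch: "sig (rev dd) (dl s) = (\<lambda>h. dl s h + (-2 * Bm (Inr i) s) * (if h \<in> Inr ` {i..n} then 1 else 0))"
    by (rule chain[OF sS hB iN]) auto
  have sn: "s \<noteq> Inr n" using sI iN i1 by (auto simp: I_eq)
  have "\<not> E (rev dd @ [s] @ rev (rev dd)) v"
  proof (rule nonmem[OF _ sS v])
    show "rev dd \<in> lists SS" using dS by (simp only: in_lists_conv_set set_rev)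
    show "Inr n \<notin> JJ" using n1 by (auto simp: J_eq)
    show "sig (rev dd) (dl s) (Inr n) \<noteq> 0" using ch sn cnz iN by (simp add: dl_def)
  qed
  then show ?thesis by simp
qed


lemma cls_E: "a \<in> lists SS \<Longrightarrow> cox_class SS MM a = cox_class SS MM b \<Longrightarrow> E b a"
  unfolding cox_class_def by blast

lemma E_cls: "E a b \<Longrightarrow> cox_class SS MM a = cox_class SS MM b"
  unfolding cox_class_def by (auto intro: E_trans E_sym)

lemma final: "parabolic SS MM II \<inter> (\<lambda>u. cox_class SS MM (dd @ u @ rev dd)) ` lists JJ = parabolic SS MM KK"
proof (rule set_eqI, rule iffI)
  fix X assume "X \<in> parabolic SS MM II \<inter> (\<lambda>u. cox_class SS MM (dd @ u @ rev dd)) ` lists JJ"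
  then obtain w u where w: "w \<in> lists II" "X = cox_class SS MM w"
    and u: "u \<in> lists JJ" "X = cox_class SS MM (dd @ u @ rev dd)"
    unfolding parabolic_def by blast
  have wS: "w \<in> lists SS" using w subsets by auto
  have "E (dd @ u @ rev dd) w" using cls_E[OF wS, of "dd @ u @ rev dd"] w(2) u(2) by simp
  then have "E w (dd @ u @ rev dd)" by (rule E_sym)
  then have 1: "E (w @ dd) ((dd @ u) @ rev dd @ dd @ [])" using E_appR[of w "dd @ u @ rev dd" dd] by simp
  have 2: "E ((dd @ u) @ rev dd @ dd @ []) ((dd @ u) @ [])" by (rule cancel2[OF dS])
  have "E (w @ dd) (dd @ u)" using E_trans[OF 1 2] by simp
  then obtain w' where w': "w' \<in> lists KK" "E w w'"
    using main_abs[OF subsets(1,2,3,4) dS commK H3 H4 w(1) u(1)] by blast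
  have "X = cox_class SS MM w'" using w(2) E_cls[OF w'(2)] by simp
  then show "X \<in> parabolic SS MM KK"
    unfolding parabolic_def using w'(1) by blast
next
  fix X assume "X \<in> parabolic SS MM KK"
  then obtain w where w: "w \<in> lists KK" "X = cox_class SS MM w" unfolding parabolic_def by blast
  have wI: "w \<in> lists II" and wJ: "w \<in> lists JJ" using w subsets by auto
  have c: "E (w @ dd) (dd @ w)" by (rule comm_lists) (use commK w in auto)
  have "E ((dd @ w) @ rev dd) ((w @ dd) @ rev dd)" using E_appR[OF E_sym[OF c]] .
  moreover have "E ([] @ w @ dd @ rev dd @ []) ([] @ w @ [])" using cancel1[OF dS, of "[] @ w" "[]"] by simp
  ultimately have "E (dd @ w @ rev dd) w" by (simp only: append_assoc append.left_neutral append_Nil2) (meson E_trans)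
  then have "X = cox_class SS MM (dd @ w @ rev dd)" using w(2) E_cls by simp
  then show "X \<in> parabolic SS MM II \<inter> (\<lambda>u. cox_class SS MM (dd @ u @ rev dd)) ` lists JJ"
    unfolding parabolic_def using w wI wJ by blast
qed

end

theorem proposition3p2:
  fixes V :: "'a set" and M :: "'a \<Rightarrow> 'a \<Rightarrow> enat" and s1 :: 'a and n i :: nat
  assumes "finite V" and "s1 \<in> V" and "coxeter_matrix V M"
    and "1 \<le> n" and "1 \<le> i" and "i \<le> n"
  shows "parabolic (gens V M s1 (int n)) (ext_M M s1) (gens V M s1 (int i - 1))
         \<inter> (\<lambda>u. cox_class (gens V M s1 (int n)) (ext_M M s1)
                  (map Inr [i..<n+1] @ u @ rev (map Inr [i..<n+1])))
              ` lists (gens V M s1 (int n - 1))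
       = parabolic (gens V M s1 (int n)) (ext_M M s1) (gens V M s1 (int i - 2))"
proof -
  interpret inst V M s1 n i using assms by unfold_locales
  show ?thesis unfolding Suc_eq_plus1[symmetric] by (rule final)
qed


end
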